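(* Let $p\ge1$, $\mathbf m=(m_1,\ldots,m_p)\in\mathbb N^p$, $n\in\mathbb N$, and $x\in\mathbb C$ with $|x|\le 1$ and $(m_p,x)\neq(1,1)$. Then \[ n\int_0^x t^{n-1}dt\,\frac{dt}{1-t}\Big(\frac{dt}{t}\Big)^{m_1-1}\frac{dt}{1-t}\Big(\frac{dt}{t}\Big)^{m_2-1}\cdots\frac{dt}{1-t}\Big(\frac{dt}{t}\Big)^{m_p-1} =(-1)^p\,\zeta^\star_n(m_1,\ldots,m_p;\underbrace{1,\ldots,1}_{p-1},x)-\sum_{j=1}^{p}(-1)^{j}\,\zeta^\star_n(m_1,\ldots,m_{j-1})\,\mathrm{Li}_{m_p,m_{p-1},\ldots,m_j}(x). \]
   Context: Iterated integrals: $\int_a^b f_q(t)dt\,f_{q-1}(t)dt\cdots f_1(t)dt:=\int_{a<t_q<\cdots<t_1<b}f_q(t_q)\cdots f_1(t_1)\,dt_1\cdots dt_q$ (the leftmost form carries the smallest variable), taken along the straight segment from $a$ to $b$ when $a,b$ are complex; $(dt/t)^{0}$ means the form is absent. For a composition $\mathbf k=(k_1,\ldots,k_r)$, variables $\mathbf x=(x_1,\ldots,x_r)$ and $n\in\mathbb N$: $\zeta^\star_n(\mathbf k;\mathbf x)=\sum_{n\ge n_1\ge\cdots\ge n_r\ge1}\prod_{i}x_i^{n_i}/n_i^{k_i}$, $\zeta^\star_n(\mathbf k)=\zeta^\star_n(\mathbf k;1,\ldots,1)$, and $\zeta^\star_n(\emptyset)=1$. The single-variable multiple polylogarithm is $\mathrm{Li}_{k_1,\ldots,k_r}(x)=\sum_{n_1>\cdots>n_r>0}x^{n_1}/(n_1^{k_1}\cdots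 n_r^{k_r})$. *)

theory Defs
  imports "HOL-Complex_Analysis.Complex_Analysis"
begin

text \<open>The list is given with the form carrying the LARGEST
variable first: itint [f1,...,fq] s = integral over 0 < t_q < ... < t_1 < s of
f_q(t_q) ... f_1(t_1), along straight segments from 0.\<close>
fun itint :: "(complex \<Rightarrow> complex) list \<Rightarrow> complex \<Rightarrow> complex" where
  "itint [] s = 1"
| "itint (f # fs) s = contour_integral (linepath 0 s) (\<lambda>t. f t * itint fs t)"

text \<open>The paper's notation: forms listed left to right, leftmost form carrying
the smallest variable.\<close>
definition iterated_integral_0 :: "complex \<Rightarrow> (complex \<Rightarrow> complex) list \<Rightarrow> complex" where
  "iterated_integral_0 b fs = itint (rev fs) b"

fun zeta_star_x :: "nat \<Rightarrow> nat list \<Rightarrow> complex list \<Rightarrow> complex" where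
  "zeta_star_x n [] _ = 1"
| "zeta_star_x n (k # ks) [] = 0"
| "zeta_star_x n (k # ks) (y # ys) =
     (\<Sum>n1=1..n. y ^ n1 / of_nat n1 ^ k * zeta_star_x n1 ks ys)"

definition zeta_star :: "nat \<Rightarrow> nat list \<Rightarrow> complex" where
  "zeta_star n ks = zeta_star_x n ks (replicate (length ks) 1)"

fun li_coeff :: "nat list \<Rightarrow> nat \<Rightarrow> complex" where
  "li_coeff [] N = (if N = 0 then 1 else 0)"
| "li_coeff [k] N = (if N = 0 then 0 else 1 / of_nat N ^ k)"
| "li_coeff (k # k' # ks) N =
     (if N = 0 then 0 else (1 / of_nat N ^ k) * (\<Sum>m\<in>{1..<N}. li_coeff (k' # ks) m))"

text \<open>Single-variable multiple polylogarithm, series summed in order of n1.\<close>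
definition Li :: "nat list \<Rightarrow> complex \<Rightarrow> complex" where
  "Li ks x = (\<Sum>N. li_coeff ks N * x ^ N)"

definition forms :: "nat \<Rightarrow> nat list \<Rightarrow> (complex \<Rightarrow> complex) list" where
  "forms n ms = (\<lambda>t. t ^ (n - 1)) #
     concat (map (\<lambda>mi. (\<lambda>t. 1 / (1 - t)) # replicate (mi - 1) (\<lambda>t. 1 / t)) ms)"

end

theory Submission
  imports Defs "HOL-Real_Asymp.Real_Asymp"
begin

fun lc :: "nat list \<Rightarrow> nat \<Rightarrow> real" where
  "lc [] N = (if N = 0 then 1 else 0)"
| "lc [k] N = (if N = 0 then 0 else 1 / of_nat N ^ k)"
| "lc (k # k' # ks) N =
     (if N = 0 then 0 else (1 / of_nat N ^ k) * (\<Sum>m\<in>{1..<N}. lc (k' # ks) m))"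

lemma li_coeff_lc: "li_coeff ks N = of_real (lc ks N)"
  by (induction ks N rule: li_coeff.induct) auto

lemma sum_inv_sqrt: "(\<Sum>m=1..M. 1 / sqrt (real m)) \<le> 2 * sqrt (real M)"
proof (induction M)
  case 0 then show ?case by simp
next
  case (Suc M)
  have "1 / sqrt (real (Suc M)) \<le> 2 * sqrt (real (Suc M)) - 2 * sqrt (real M)"
  proof -
    have s: "sqrt (real M) \<le> sqrt (real (Suc M))" by simp
    have p: "sqrt (real (Suc M)) > 0" by simp
    have "(sqrt (real (Suc M)) - sqrt (real M)) * (sqrt (real (Suc M)) + sqrt (real M)) = 1"
      by (simp add: algebra_simps)
    then have "1 = (sqrt (real (Suc M)) - sqrt (real M)) * (sqrt (real (Suc M)) + sqrt (real M))" ..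
    also have "\<dots> \<le> (sqrt (real (Suc M)) - sqrt (real M)) * (2 * sqrt (real (Suc M)))"
      using s by (intro mult_left_mono) auto
    finally show ?thesis using p by (simp add: field_simps)
  qed
  then show ?case using Suc by simp
qed

lemma sum_inv_sqrt': "(\<Sum>m\<in>{1..<N}. 1 / sqrt (real m)) \<le> 2 * sqrt (real N)"
proof (cases N)
  case 0 then show ?thesis by simp
next
  case (Suc M)
  have "{1..<N} = {1..M}" using Suc by auto
  then have "(\<Sum>m\<in>{1..<N}. 1 / sqrt (real m)) \<le> 2 * sqrt (real M)" using sum_inv_sqrt by simp
  also have "\<dots> \<le> 2 * sqrt (real N)" using Suc by simp
  finally show ?thesis .
qed

lemma sqrt_le_self_nat: "1 \<le> x \<Longrightarrow> sqrt (x::real) \<le> x"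
proof -
  assume x: "1 \<le> x"
  have "1 \<le> sqrt x" using x by simp
  then have "sqrt x * 1 \<le> sqrt x * sqrt x" by (intro mult_left_mono) auto
  then show ?thesis using x by simp
qed

lemma lc_bound:
  assumes "ks \<noteq> []" "\<forall>k\<in>set ks. k \<ge> 1"
  shows "0 \<le> lc ks m \<and> lc ks m \<le> 2 ^ (length ks - 1) / sqrt (real m)"
  using assms
proof (induction ks m rule: lc.induct)
  case (1 N) then show ?case by simp
next
  case (2 k N)
  show ?case
  proof (cases N)
    case 0 then show ?thesis by simp
  next
    case (Suc M)
    have "1 / real N ^ k \<le> 1 / real N" using 2 Suc
      by (intro divide_left_mono) (auto intro!: self_le_power)
    also have "\<dots> \<le> 1 / sqrt (real N)" using Suc
      by (intro divide_left_mono) (auto intro: sqrt_le_self_nat)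
    finally show ?thesis using Suc by simp
  qed
next
  case (3 k k' ks N)
  show ?case
  proof (cases N)
    case 0 then show ?thesis by simp
  next
    case (Suc M)
    have IH: "\<And>m. m \<in> {1..<N} \<Longrightarrow> 0 \<le> lc (k' # ks) m \<and> lc (k' # ks) m \<le> 2 ^ (length ks) / sqrt (real m)"
      using 3 Suc by auto
    have S0: "0 \<le> (\<Sum>m\<in>{1..<N}. lc (k' # ks) m)" using IH by (intro sum_nonneg) auto
    have "(\<Sum>m\<in>{1..<N}. lc (k' # ks) m) \<le> (\<Sum>m\<in>{1..<N}. 2 ^ (length ks) * (1 / sqrt (real m)))"
      using IH by (intro sum_mono) auto
    also have "\<dots> = 2 ^ (length ks) * (\<Sum>m\<in>{1..<N}. 1 / sqrt (real m))"
      by (simp add: sum_distrib_left)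
    also have "\<dots> \<le> 2 ^ (length ks) * (2 * sqrt (real N))"
      by (intro mult_left_mono sum_inv_sqrt') auto
    finally have S1: "(\<Sum>m\<in>{1..<N}. lc (k' # ks) m) \<le> 2 ^ Suc (length ks) * sqrt (real N)" by simp
    have "N \<noteq> 0" using Suc by simp
    have k1: "1 / real N ^ k \<le> 1 / real N" using 3 Suc
      by (intro divide_left_mono) (auto intro!: self_le_power)
    have "lc (k # k' # ks) N \<le> (1 / real N) * (2 ^ Suc (length ks) * sqrt (real N))"
    proof -
      have "lc (k # k' # ks) N = (1 / real N ^ k) * (\<Sum>m\<in>{1..<N}. lc (k' # ks) m)"
        using \<open>N \<noteq> 0\<close> by simp
      also have "\<dots> \<le> (1 / real N) * (2 ^ Suc (length ks) * sqrt (real N))"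
        using S0 S1 k1 by (intro mult_mono) auto
      finally show ?thesis .
    qed
    also have "\<dots> = 2 ^ Suc (length ks) / sqrt (real N)"
    proof -
      have q: "sqrt (real N) * sqrt (real N) = real N" by simp
      have "sqrt (real N) > 0" using \<open>N \<noteq> 0\<close> by simp
      then show ?thesis using q by (simp add: divide_simps)
    qed
    finally show ?thesis using \<open>N \<noteq> 0\<close> S0 by simp
  qed
qed


lemma G1:
  fixes c :: "nat \<Rightarrow> complex"
  assumes "summable (\<lambda>N. norm (c N))"
  shows "continuous_on (cball 0 1) (\<lambda>z. \<Sum>N. c N * z ^ N)"
proof -
  have "uniform_limit (cball 0 1) (\<lambda>K z. \<Sum>N<K. c N * z ^ N) (\<lambda>z. \<Sum>N. c N * z ^ N) sequentially"
  proof (rule Weierstrass_m_test[OF _ assms])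
    fix N and z :: complex assume "z \<in> cball 0 1"
    then have "norm z \<le> 1" by simp
    then have "norm z ^ N \<le> 1" by (simp add: power_le_one)
    then show "norm (c N * z ^ N) \<le> norm (c N)"
      by (simp add: norm_mult norm_power mult_left_le)
  qed
  then show ?thesis
    by (rule uniform_limit_theorem[rotated]) (auto intro!: always_eventually continuous_intros)
qed

definition dseq :: "(nat \<Rightarrow> complex) \<Rightarrow> nat \<Rightarrow> complex" where
  "dseq c N = (if N = 0 then c 0 else c N - c (N - 1))"

lemma partial_identity:
  fixes c :: "nat \<Rightarrow> complex"
  shows "(1 - z) * (\<Sum>N<Suc K. c N * z ^ N) = (\<Sum>N<Suc K. dseq c N * z ^ N) - c K * z ^ Suc K"
proof (induction K)
  case 0 then show ?case by (simp add: dseq_def algebra_simps)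
next
  case (Suc K)
  have "(1 - z) * (\<Sum>N<Suc (Suc K). c N * z ^ N)
      = (1 - z) * (\<Sum>N<Suc K. c N * z ^ N) + (1 - z) * c (Suc K) * z ^ Suc K"
    by (simp add: algebra_simps)
  also have "\<dots> = (\<Sum>N<Suc K. dseq c N * z ^ N) - c K * z ^ Suc K + (1 - z) * c (Suc K) * z ^ Suc K"
    using Suc.IH by simp
  also have "\<dots> = (\<Sum>N<Suc K. dseq c N * z ^ N) + dseq c (Suc K) * z ^ Suc K - c (Suc K) * z ^ Suc (Suc K)"
    by (simp add: dseq_def algebra_simps)
  also have "\<dots> = (\<Sum>N<Suc (Suc K). dseq c N * z ^ N) - c (Suc K) * z ^ Suc (Suc K)"
    by simp
  finally show ?case .
qed

lemma G2_sums:
  fixes c :: "nat \<Rightarrow> complex"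
  assumes "summable (\<lambda>N. norm (c (Suc N) - c N))" "c \<longlonglongrightarrow> 0"
    and "norm z \<le> 1" "z \<noteq> 1"
  shows "(\<lambda>N. c N * z ^ N) sums ((\<Sum>N. dseq c N * z ^ N) / (1 - z))"
proof -
  have sd: "summable (\<lambda>N. norm (dseq c N))"
    using assms(1) by (subst summable_Suc_iff[symmetric]) (simp add: dseq_def)
  have sdz: "summable (\<lambda>N. dseq c N * z ^ N)"
  proof (rule summable_norm_cancel, rule summable_comparison_test[OF _ sd])
    show "\<exists>N0. \<forall>N\<ge>N0. norm (norm (dseq c N * z ^ N)) \<le> norm (dseq c N)"
      using assms(3) by (auto simp: norm_mult norm_power intro!: mult_left_le power_le_one)
  qed
  have P: "(\<lambda>K. \<Sum>N<Suc K. dseq c N * z ^ N) \<longlonglongrightarrow> (\<Sum>N. dseq c N * z ^ N)"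
    using sdz by (intro LIMSEQ_Suc) (simp add: summable_LIMSEQ)
  have C: "(\<lambda>K. c K * z ^ Suc K) \<longlonglongrightarrow> 0"
  proof (rule Lim_null_comparison[OF _ tendsto_norm_zero[OF assms(2)]])
    have "norm (c K * z ^ Suc K) \<le> norm (c K)" for K
    proof -
      have "norm z ^ Suc K \<le> 1" using assms(3) by (intro power_le_one) auto
      then show ?thesis by (simp only: norm_mult norm_power) (intro mult_left_le, auto)
    qed
    then show "\<forall>\<^sub>F K in sequentially. norm (c K * z ^ Suc K) \<le> norm (c K)" by simp
  qed
  have "(\<lambda>K. ((\<Sum>N<Suc K. dseq c N * z ^ N) - c K * z ^ Suc K) / (1 - z))
         \<longlonglongrightarrow> ((\<Sum>N. dseq c N * z ^ N) - 0) / (1 - z)"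
    using assms(4) by (intro tendsto_intros P C) auto
  moreover have "\<And>K. ((\<Sum>N<Suc K. dseq c N * z ^ N) - c K * z ^ Suc K) / (1 - z) = (\<Sum>N<Suc K. c N * z ^ N)"
  proof -
    fix K
    have nz: "1 - z \<noteq> 0" using assms(4) by simp
    have e: "(\<Sum>N<Suc K. dseq c N * z ^ N) - c K * z ^ Suc K = (1 - z) * (\<Sum>N<Suc K. c N * z ^ N)"
      using partial_identity[of z c K] by simp
    show "((\<Sum>N<Suc K. dseq c N * z ^ N) - c K * z ^ Suc K) / (1 - z) = (\<Sum>N<Suc K. c N * z ^ N)"
      unfolding e using nz by simp
  qed
  ultimately have "(\<lambda>K. \<Sum>N<Suc K. c N * z ^ N) \<longlonglongrightarrow> (\<Sum>N. dseq c N * z ^ N) / (1 - z)"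
    by simp
  then show ?thesis unfolding sums_def by (rule LIMSEQ_imp_Suc)
qed

lemma G2:
  fixes c :: "nat \<Rightarrow> complex"
  assumes "summable (\<lambda>N. norm (c (Suc N) - c N))" "c \<longlonglongrightarrow> 0"
  shows "continuous_on (cball 0 1 - {1}) (\<lambda>z. \<Sum>N. c N * z ^ N)"
proof -
  have sd: "summable (\<lambda>N. norm (dseq c N))"
    using assms(1) by (subst summable_Suc_iff[symmetric]) (simp add: dseq_def)
  have "continuous_on (cball 0 1 - {1}) (\<lambda>z. (\<Sum>N. dseq c N * z ^ N) / (1 - z))"
    by (intro continuous_intros continuous_on_subset[OF G1[OF sd]]) auto
  then show ?thesis
    by (rule continuous_on_cong[THEN iffD1, rotated 2])
       (use G2_sums[OF assms] sums_unique in auto)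
qed


lemma lc_sum_bound:
  assumes "ks \<noteq> []" "\<forall>k\<in>set ks. k \<ge> 1"
  shows "0 \<le> (\<Sum>m\<in>{1..<N}. lc ks m) \<and> (\<Sum>m\<in>{1..<N}. lc ks m) \<le> 2 ^ length ks * sqrt (real N)"
proof -
  have IH: "\<And>m. 0 \<le> lc ks m \<and> lc ks m \<le> 2 ^ (length ks - 1) / sqrt (real m)"
    using lc_bound[OF assms] by blast
  have S0: "0 \<le> (\<Sum>m\<in>{1..<N}. lc ks m)" using IH by (intro sum_nonneg) auto
  have "(\<Sum>m\<in>{1..<N}. lc ks m) \<le> (\<Sum>m\<in>{1..<N}. 2 ^ (length ks - 1) * (1 / sqrt (real m)))"
    using IH by (intro sum_mono) auto
  also have "\<dots> = 2 ^ (length ks - 1) * (\<Sum>m\<in>{1..<N}. 1 / sqrt (real m))"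
    by (simp add: sum_distrib_left)
  also have "\<dots> \<le> 2 ^ (length ks - 1) * (2 * sqrt (real N))"
    by (intro mult_left_mono sum_inv_sqrt') auto
  also have "\<dots> = 2 ^ length ks * sqrt (real N)"
    using assms(1) by (cases ks) auto
  finally show ?thesis using S0 by simp
qed

lemma summable_32: "summable (\<lambda>m. 1 / (real m * sqrt (real m)))"
proof -
  have "summable (\<lambda>m. real m powr (-3/2))" by (subst summable_real_powr_iff) simp
  moreover have "real m powr (-3/2) = 1 / (real m * sqrt (real m))" for m
  proof (cases "m = 0")
    case True then show ?thesis by simp
  next
    case False
    then have "real m * sqrt (real m) = real m powr (3/2)"
      by (simp add: powr_half_sqrt[symmetric] powr_add[symmetric] powr_mult_base)
    then show ?thesis using False by (simp add: powr_minus_divide)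
  qed
  ultimately show ?thesis by simp
qed

lemma sqrt_frac: "m > 0 \<Longrightarrow> sqrt (real m) / (real m * real m) = 1 / (real m * sqrt (real m))"
proof -
  assume "m > 0"
  then have s: "sqrt (real m) > 0" by simp
  have "sqrt (real m) * sqrt (real m) = real m" by simp
  then show ?thesis using s by (simp add: divide_simps)
qed

lemma lc_bound2:
  assumes "ks = k # rest" "k \<ge> 2" "\<forall>k\<in>set ks. k \<ge> 1"
  shows "lc ks m \<le> 2 ^ length ks / (real m * sqrt (real m))"
proof (cases "m = 0")
  case True then show ?thesis using assms by (cases rest) auto
next
  case False
  have k1: "1 / real m ^ k \<le> 1 / (real m * real m)" using assms False
    by (intro divide_left_mono) (auto simp: power2_eq_square[symmetric] intro!: power_increasing)
  show ?thesis
  proof (cases rest)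
    case Nil
    have "lc ks m = 1 / real m ^ k" using Nil assms False by simp
    also have "\<dots> \<le> 1 / (real m * real m)" by (rule k1)
    also have "\<dots> \<le> 1 / (real m * sqrt (real m))" using False
      by (intro divide_left_mono mult_left_mono) (auto intro: sqrt_le_self_nat)
    also have "\<dots> \<le> 2 ^ length ks / (real m * sqrt (real m))"
      by (intro divide_right_mono) auto
    finally show ?thesis .
  next
    case (Cons k' rs)
    have B: "0 \<le> (\<Sum>j\<in>{1..<m}. lc rest j) \<and> (\<Sum>j\<in>{1..<m}. lc rest j) \<le> 2 ^ length rest * sqrt (real m)"
      using lc_sum_bound[of rest m] assms Cons by auto
    have "lc ks m = (1 / real m ^ k) * (\<Sum>j\<in>{1..<m}. lc rest j)" using Cons assms False by simp
    also have "\<dots> \<le> (1 / (real m * real m)) * (2 ^ length rest * sqrt (real m))"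
      using B k1 by (intro mult_mono) auto
    also have "\<dots> = 2 ^ length rest * (sqrt (real m) / (real m * real m))" by simp
    also have "\<dots> = 2 ^ length rest * (1 / (real m * sqrt (real m)))" using False sqrt_frac by simp
    also have "\<dots> \<le> 2 ^ length ks * (1 / (real m * sqrt (real m)))"
      using assms by (intro mult_right_mono) auto
    finally show ?thesis by simp
  qed
qed

lemma Li_cont2:
  assumes "ks = k # rest" "k \<ge> 2" "\<forall>k\<in>set ks. k \<ge> 1"
  shows "continuous_on (cball 0 1) (Li ks)"
proof -
  have "summable (\<lambda>N. norm (li_coeff ks N))"
  proof (rule summable_comparison_test[OF _ summable_mult[OF summable_32, of "2 ^ length ks"]])
    show "\<exists>N0. \<forall>N\<ge>N0. norm (norm (li_coeff ks N)) \<le> 2 ^ length ks * (1 / (real N * sqrt (real N)))"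
      using lc_bound2[OF assms] lc_bound[of ks] assms by (auto simp: li_coeff_lc)
  qed
  then show ?thesis unfolding Li_def[abs_def] by (rule G1)
qed


lemma lc_tendsto0:
  assumes "ks \<noteq> []" "\<forall>k\<in>set ks. k \<ge> 1"
  shows "(\<lambda>m. li_coeff ks m) \<longlonglongrightarrow> 0"
proof -
  have "(\<lambda>m. lc ks m) \<longlonglongrightarrow> 0"
  proof (rule Lim_null_comparison)
    show "(\<lambda>m::nat. 2 ^ (length ks - 1) / sqrt (real m)) \<longlonglongrightarrow> 0" by real_asymp
    show "\<forall>\<^sub>F m in sequentially. norm (lc ks m) \<le> 2 ^ (length ks - 1) / sqrt (real m)"
      using lc_bound[OF assms] by auto
  qed
  then have "(\<lambda>m. complex_of_real (lc ks m)) \<longlonglongrightarrow> of_real 0" by (intro tendsto_of_real)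
  then show ?thesis by (simp add: li_coeff_lc)
qed

lemma lc_diff_bound:
  assumes "ks = 1 # rest" "\<forall>k\<in>set ks. k \<ge> 1" "N \<ge> 1"
  shows "\<bar>lc ks (Suc N) - lc ks N\<bar> \<le> 2 ^ Suc (length ks) * (1 / (real N * sqrt (real N)))"
proof (cases rest)
  case Nil
  have "\<bar>lc ks (Suc N) - lc ks N\<bar> = 1 / real N - 1 / (real N + 1)"
  proof -
    have "1 / (real N + 1) \<le> 1 / real N" using assms by (intro divide_left_mono) auto
    then show ?thesis using Nil assms by (simp add: abs_of_nonpos add.commute)
  qed
  also have "\<dots> = 1 / (real N * (real N + 1))" using assms by (simp add: field_simps)
  also have "\<dots> \<le> 1 / (real N * sqrt (real N))" using assms
    by (intro divide_left_mono mult_left_mono) (auto intro: order_trans[OF sqrt_le_self_nat])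
  also have "\<dots> \<le> 2 ^ Suc (length ks) * (1 / (real N * sqrt (real N)))"
  proof -
    have "(1::real) \<le> 2 ^ Suc (length ks)" by (rule one_le_power) simp
    moreover have "0 \<le> 1 / (real N * sqrt (real N))" by simp
    ultimately show ?thesis using mult_right_mono[of 1 "2 ^ Suc (length ks)" "1 / (real N * sqrt (real N))"] by simp
  qed
  finally show ?thesis .
next
  case (Cons k' rs)
  define T where "T = (\<Sum>j\<in>{1..<N}. lc rest j)"
  define a where "a = lc rest N"
  have B: "0 \<le> T \<and> T \<le> 2 ^ length rest * sqrt (real N)"
    unfolding T_def using lc_sum_bound[of rest N] assms Cons by auto
  have A: "0 \<le> a \<and> a \<le> 2 ^ (length rest - 1) / sqrt (real N)"
    unfolding a_def using lc_bound[of rest N] assms Cons by auto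
  have TS: "(\<Sum>j\<in>{1..<Suc N}. lc rest j) = T + a"
    unfolding T_def a_def using assms by (simp add: sum.atLeastLessThan_Suc)
  have e1: "lc ks (Suc N) = (1 / (real N + 1)) * (T + a)"
    using Cons assms TS by simp
  have e2: "lc ks N = (1 / real N) * T" using Cons assms unfolding T_def by simp
  have Np: "real N > 0" using assms by simp
  have d: "lc ks (Suc N) - lc ks N = a / (real N + 1) - T / (real N * (real N + 1))"
  proof -
    have "(1 / (real N + 1)) * (T + a) - (1 / real N) * T = a / (real N + 1) + T * (1 / (real N + 1) - 1 / real N)"
      by (simp add: algebra_simps add_divide_distrib)
    also have "1 / (real N + 1) - 1 / real N = - 1 / (real N * (real N + 1))"
      using Np by (simp add: divide_simps)
    finally show ?thesis unfolding e1 e2 by simp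
  qed
  have "\<bar>lc ks (Suc N) - lc ks N\<bar> \<le> a / (real N + 1) + T / (real N * (real N + 1))"
    unfolding d using A B Np by (simp add: abs_le_iff)
  also have "\<dots> \<le> a / real N + T / (real N * real N)"
    using A B Np by (intro add_mono divide_left_mono mult_left_mono) auto
  also have "\<dots> \<le> (2 ^ (length rest - 1) / sqrt (real N)) / real N
                 + (2 ^ length rest * sqrt (real N)) / (real N * real N)"
    using A B Np by (intro add_mono divide_right_mono) auto
  also have "\<dots> = 2 ^ (length rest - 1) * (1 / (real N * sqrt (real N)))
                 + 2 ^ length rest * (1 / (real N * sqrt (real N)))"
  proof -
    have "(2 ^ (length rest - 1) / sqrt (real N)) / real N = 2 ^ (length rest - 1) * (1 / (real N * sqrt (real N)))"
      by (simp add: mult.commute)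
    moreover have "(2 ^ length rest * sqrt (real N)) / (real N * real N) = 2 ^ length rest * (sqrt (real N) / (real N * real N))"
      by simp
    ultimately show ?thesis using sqrt_frac[of N] Np by simp
  qed
  also have "\<dots> \<le> 2 ^ Suc (length ks) * (1 / (real N * sqrt (real N)))"
  proof -
    have "(2::real) ^ (length rest - 1) \<le> 2 ^ length rest" by (intro power_increasing) auto
    moreover have "(2::real) ^ length rest \<le> 2 ^ length ks"
      using assms by (intro power_increasing) auto
    ultimately have "(2::real) ^ (length rest - 1) + 2 ^ length rest \<le> 2 ^ Suc (length ks)"
      by (simp only: power_Suc)
    then show ?thesis using Np by (simp only: distrib_right[symmetric]) (intro mult_right_mono, auto)
  qed
  finally show ?thesis .
qed

lemma Li_cont1:
  assumes "ks = 1 # rest" "\<forall>k\<in>set ks. k \<ge> 1"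
  shows "continuous_on (cball 0 1 - {1}) (Li ks)"
proof -
  have "summable (\<lambda>N. norm (li_coeff ks (Suc N) - li_coeff ks N))"
  proof (rule summable_comparison_test[OF _ summable_mult[OF summable_32, of "2 ^ Suc (length ks)"]])
    show "\<exists>N0. \<forall>N\<ge>N0. norm (norm (li_coeff ks (Suc N) - li_coeff ks N))
            \<le> 2 ^ Suc (length ks) * (1 / (real N * sqrt (real N)))"
    proof (intro exI[of _ 1] allI impI)
      fix N :: nat assume "N \<ge> 1"
      have "norm (li_coeff ks (Suc N) - li_coeff ks N) = \<bar>lc ks (Suc N) - lc ks N\<bar>"
        by (simp add: li_coeff_lc flip: of_real_diff)
      then show "norm (norm (li_coeff ks (Suc N) - li_coeff ks N))
            \<le> 2 ^ Suc (length ks) * (1 / (real N * sqrt (real N)))"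
        using lc_diff_bound[OF assms \<open>N \<ge> 1\<close>] by simp
    qed
  qed
  moreover have "(\<lambda>m. li_coeff ks m) \<longlonglongrightarrow> 0" using lc_tendsto0 assms by auto
  ultimately show ?thesis unfolding Li_def[abs_def] by (rule G2)
qed


lemma lc_le_const:
  assumes "ks \<noteq> []" "\<forall>k\<in>set ks. k \<ge> 1"
  shows "norm (li_coeff ks m) \<le> 2 ^ (length ks - 1)"
proof (cases "m = 0")
  case True
  obtain k rest where "ks = k # rest" using assms by (cases ks) auto
  then show ?thesis using True by (cases rest) auto
next
  case False
  have b: "0 \<le> lc ks m \<and> lc ks m \<le> 2 ^ (length ks - 1) / sqrt (real m)" by (rule lc_bound[OF assms])
  have "2 ^ (length ks - 1) / sqrt (real m) \<le> 2 ^ (length ks - 1) / 1"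
    using False by (intro divide_left_mono) auto
  then show ?thesis using b by (simp add: li_coeff_lc)
qed

lemma Li_summable:
  assumes "ks \<noteq> []" "\<forall>k\<in>set ks. k \<ge> 1" "norm z < 1"
  shows "summable (\<lambda>N. norm (li_coeff ks N * z ^ N))"
proof (rule summable_comparison_test[OF _ summable_mult[OF summable_geometric[of "norm z"], of "2 ^ (length ks - 1)"]])
  show "\<exists>N0. \<forall>N\<ge>N0. norm (norm (li_coeff ks N * z ^ N)) \<le> 2 ^ (length ks - 1) * norm z ^ N"
    using lc_le_const[OF assms(1,2)] by (auto simp: norm_mult norm_power intro!: mult_right_mono)
qed (use assms in auto)

lemma Li_deriv_gen:
  assumes "ks \<noteq> []" "\<forall>k\<in>set ks. k \<ge> 1" "norm z < 1"
  shows "(Li ks has_field_derivative (\<Sum>n. diffs (li_coeff ks) n * z ^ n)) (at z)"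
  unfolding Li_def[abs_def]
proof (rule termdiffs_strong'[of 1])
  fix w :: complex assume "norm w < 1"
  show "summable (\<lambda>n. li_coeff ks n * w ^ n)"
    by (rule summable_norm_cancel[OF Li_summable[OF assms(1,2) \<open>norm w < 1\<close>]])
qed (use assms(3) in auto)

lemma li_coeff_zero: "ks \<noteq> [] \<Longrightarrow> li_coeff ks 0 = 0"
proof -
  assume "ks \<noteq> []"
  then obtain k rest where "ks = k # rest" by (cases ks) auto
  then show ?thesis by (cases rest) auto
qed

lemma nzSuc: "(of_nat (Suc n) :: complex) \<noteq> 0"
  by (simp only: of_nat_eq_0_iff)

lemma diffs_Suc_head:
  assumes "r \<ge> 1"
  shows "diffs (li_coeff (Suc r # rest)) n = li_coeff (r # rest) (Suc n)"
proof (cases rest)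
  case Nil
  then show ?thesis using assms nzSuc[of n] by (simp add: diffs_def field_simps del: of_nat_Suc)
next
  case (Cons k' rs)
  then show ?thesis using assms nzSuc[of n]
    by (simp only: diffs_def li_coeff.simps if_False nat.simps) (simp add: field_simps del: of_nat_Suc)
qed

lemma LiD1:
  assumes "r \<ge> 1" "\<forall>k\<in>set rest. k \<ge> 1" "norm z < 1" "z \<noteq> 0"
  shows "(Li (Suc r # rest) has_field_derivative Li (r # rest) z / z) (at z)"
proof -
  have D: "(Li (Suc r # rest) has_field_derivative (\<Sum>n. li_coeff (r # rest) (Suc n) * z ^ n)) (at z)"
    using Li_deriv_gen[of "Suc r # rest" z] assms diffs_Suc_head[OF assms(1)] by auto
  have s: "summable (\<lambda>N. li_coeff (r # rest) N * z ^ N)"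
    using Li_summable[of "r # rest" z] assms summable_norm_cancel by auto
  have "Li (r # rest) z = (\<Sum>n. li_coeff (r # rest) (Suc n) * z ^ Suc n)"
    unfolding Li_def using suminf_split_head[OF s] li_coeff_zero[of "r # rest"] by simp
  also have "\<dots> = z * (\<Sum>n. li_coeff (r # rest) (Suc n) * z ^ n)"
  proof -
    have s2: "summable (\<lambda>n. li_coeff (r # rest) (Suc n) * z ^ n)"
    proof -
      have "summable (\<lambda>n. li_coeff (r # rest) (Suc n) * z ^ Suc n)"
        using s by (subst summable_Suc_iff)
      then have "summable (\<lambda>n. (1/z) * (li_coeff (r # rest) (Suc n) * z ^ Suc n))"
        by (rule summable_mult)
      then show ?thesis using assms(4) by simp
    qed
    show ?thesis using suminf_mult[OF s2, of z] by (simp add: algebra_simps)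
  qed
  finally have "(\<Sum>n. li_coeff (r # rest) (Suc n) * z ^ n) = Li (r # rest) z / z"
    using assms(4) by simp
  then show ?thesis using D by simp
qed

lemma diffs_one_head:
  assumes "rest \<noteq> []"
  shows "diffs (li_coeff (1 # rest)) n = (\<Sum>m\<le>n. li_coeff rest m)"
proof -
  obtain k' rs where r: "rest = k' # rs" using assms by (cases rest) auto
  have "(\<Sum>m\<le>n. li_coeff rest m) = (\<Sum>m\<in>{1..<Suc n}. li_coeff rest m)"
  proof -
    have "{..n} = insert 0 {1..<Suc n}" by auto
    then show ?thesis using li_coeff_zero[OF assms] by simp
  qed
  then show ?thesis using r nzSuc[of n]
    by (simp only: diffs_def li_coeff.simps if_False nat.simps) (simp del: of_nat_Suc)
qed

lemma LiD2:
  assumes "rest \<noteq> []" "\<forall>k\<in>set rest. k \<ge> 1" "norm z < 1"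
  shows "(Li (1 # rest) has_field_derivative Li rest z / (1 - z)) (at z)"
proof -
  have D: "(Li (1 # rest) has_field_derivative (\<Sum>n. (\<Sum>m\<le>n. li_coeff rest m) * z ^ n)) (at z)"
    using Li_deriv_gen[of "1 # rest" z] assms diffs_one_head[OF assms(1)] by auto
  have "Li rest z * (\<Sum>n. z ^ n) = (\<Sum>k. \<Sum>i\<le>k. li_coeff rest i * z ^ i * z ^ (k - i))"
    unfolding Li_def
    by (rule Cauchy_product[OF Li_summable[OF assms]]) (use assms(3) in \<open>simp add: norm_power summable_geometric\<close>)
  also have "\<dots> = (\<Sum>n. (\<Sum>m\<le>n. li_coeff rest m) * z ^ n)"
  proof -
    have "(\<Sum>i\<le>k. li_coeff rest i * z ^ i * z ^ (k - i)) = (\<Sum>m\<le>k. li_coeff rest m) * z ^ k" for k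
      by (simp add: sum_distrib_right mult.assoc power_add[symmetric])
    then show ?thesis by simp
  qed
  finally show ?thesis using D suminf_geometric[OF assms(3)] by simp
qed

lemma LiD3:
  assumes "norm z < 1"
  shows "(Li [1] has_field_derivative 1 / (1 - z)) (at z)"
proof -
  have "diffs (li_coeff [1]) n = 1" for n using nzSuc[of n] by (simp add: diffs_def del: of_nat_Suc)
  then show ?thesis using Li_deriv_gen[of "[1]" z] assms suminf_geometric[OF assms] by simp
qed


fun Ez :: "nat \<Rightarrow> nat list \<Rightarrow> (nat \<Rightarrow> complex) \<Rightarrow> complex" where
  "Ez n [] f = f n"
| "Ez n (k # ks) f = (\<Sum>n1=1..n. (1 / of_nat n1 ^ k) * Ez n1 ks f)"

lemma L2: "zeta_star_x n ms (replicate (length ms) 1) = Ez n ms (\<lambda>_. 1)"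
  by (induction ms arbitrary: n) (auto simp: field_simps)

lemma zeta_star_Ez: "zeta_star n ms = Ez n ms (\<lambda>_. 1)"
  unfolding zeta_star_def by (rule L2)

lemma L1: "ms \<noteq> [] \<Longrightarrow> zeta_star_x n ms (replicate (length ms - 1) 1 @ [t]) = Ez n ms (\<lambda>m. t ^ m)"
proof (induction ms arbitrary: n)
  case Nil then show ?case by simp
next
  case (Cons k ks)
  show ?case
  proof (cases ks)
    case Nil then show ?thesis by (simp add: field_simps)
  next
    case (Cons k' ks')
    then have "replicate (length (k # ks) - 1) 1 @ [t] = 1 # (replicate (length ks - 1) 1 @ [t])"
      by simp
    then show ?thesis using Cons.IH Cons by (simp add: field_simps)
  qed
qed

lemma L3: "Ez n (ms @ [k]) f = Ez n ms (\<lambda>m. \<Sum>\<nu>=1..m. f \<nu> / of_nat \<nu> ^ k)"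
  by (induction ms arbitrary: n) (auto simp: field_simps)

lemma Ez_cmult: "Ez n ms (\<lambda>m. c * f m) = c * Ez n ms f"
  by (induction ms arbitrary: n) (auto simp: sum_distrib_left algebra_simps)

lemma Ez_diff: "Ez n ms (\<lambda>m. f m - g m) = Ez n ms f - Ez n ms g"
  by (induction ms arbitrary: n) (simp_all add: sum_subtractf[symmetric] right_diff_distrib)

lemma Ez_cong: "(\<And>m. m \<ge> 1 \<Longrightarrow> f m = g m) \<Longrightarrow> n \<ge> 1 \<Longrightarrow> Ez n ms f = Ez n ms g"
  by (induction ms arbitrary: n) auto

lemma Ez_deriv:
  assumes "\<And>m. ((\<lambda>t. F m t) has_field_derivative F' m) (at t)"
  shows "((\<lambda>t. Ez n ms (\<lambda>m. F m t)) has_field_derivative Ez n ms F') (at t)"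
proof (induction ms arbitrary: n)
  case Nil then show ?case using assms by simp
next
  case (Cons k ks)
  then show ?case by (simp only: Ez.simps) (intro DERIV_sum DERIV_cmult, auto)
qed

definition P :: "nat \<Rightarrow> nat \<Rightarrow> complex \<Rightarrow> complex" where
  "P k m t = (\<Sum>\<nu>=1..m. t ^ \<nu> / of_nat \<nu> ^ k)"

lemma P_deriv_Suc:
  assumes "t \<noteq> 0"
  shows "((\<lambda>t. P (Suc r) m t) has_field_derivative P r m t / t) (at t)"
proof -
  have "((\<lambda>t. P (Suc r) m t) has_field_derivative (\<Sum>\<nu>=1..m. of_nat \<nu> * t ^ (\<nu> - 1) / of_nat \<nu> ^ Suc r)) (at t)"
    unfolding P_def by (auto intro!: derivative_eq_intros)
  moreover have "(\<Sum>\<nu>=1..m. of_nat \<nu> * t ^ (\<nu> - 1) / of_nat \<nu> ^ Suc r) = P r m t / t"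
    unfolding P_def sum_divide_distrib
  proof (rule sum.cong)
    fix \<nu> assume "\<nu> \<in> {1..m}"
    then have "t ^ \<nu> = t * t ^ (\<nu> - 1)" by (cases \<nu>) auto
    then show "of_nat \<nu> * t ^ (\<nu> - 1) / of_nat \<nu> ^ Suc r = t ^ \<nu> / of_nat \<nu> ^ r / t"
      using assms \<open>\<nu> \<in> {1..m}\<close> by (simp add: field_simps)
  qed simp
  ultimately show ?thesis by simp
qed

lemma P_deriv_1:
  assumes "t \<noteq> 1"
  shows "((\<lambda>t. P 1 m t) has_field_derivative (1 - t ^ m) / (1 - t)) (at t)"
proof -
  have "((\<lambda>t. P 1 m t) has_field_derivative (\<Sum>\<nu>=1..m. of_nat \<nu> * t ^ (\<nu> - 1) / of_nat \<nu>)) (at t)"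
    unfolding P_def by (auto intro!: derivative_eq_intros)
  moreover have "(\<Sum>\<nu>=1..m. of_nat \<nu> * t ^ (\<nu> - 1) / of_nat \<nu>) = (\<Sum>i<m. t ^ i)"
  proof -
    have "(\<Sum>\<nu>=1..m. of_nat \<nu> * t ^ (\<nu> - 1) / (of_nat \<nu> :: complex)) = (\<Sum>\<nu>=1..m. t ^ (\<nu> - 1))"
      by (intro sum.cong) auto
    also have "\<dots> = (\<Sum>i<m. t ^ i)" by (simp add: sum.atLeast1_atMost_eq)
    finally show ?thesis .
  qed
  ultimately show ?thesis using assms by (simp add: sum_gp_strict)
qed


definition R :: "nat \<Rightarrow> nat list \<Rightarrow> complex \<Rightarrow> complex" where
  "R n ms t = (-1) ^ length ms * Ez n ms (\<lambda>m. t ^ m)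
     - (\<Sum>i<length ms. (-1) ^ Suc i * zeta_star n (take i ms) * Li (rev (drop i ms)) t)"

lemma R_snoc:
  "R n (ms0 @ [k]) t = (-1) ^ Suc (length ms0) * Ez n ms0 (\<lambda>m. P k m t)
     - (\<Sum>i<length ms0. (-1) ^ Suc i * zeta_star n (take i ms0) * Li (k # rev (drop i ms0)) t)
     - (-1) ^ Suc (length ms0) * zeta_star n ms0 * Li [k] t"
proof -
  have s: "(\<Sum>i<length ms0. (-1) ^ Suc i * zeta_star n (take i (ms0 @ [k])) * Li (rev (drop i (ms0 @ [k]))) t)
        = (\<Sum>i<length ms0. (-1) ^ Suc i * zeta_star n (take i ms0) * Li (k # rev (drop i ms0)) t)"
    by (intro sum.cong) auto
  show ?thesis
    unfolding R_def L3 P_def[abs_def] using s by (simp add: algebra_simps)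
qed

lemma set_rev_drop: "set (rev (drop i xs)) \<subseteq> set xs"
  by (auto dest: in_set_dropD)

lemma R_deriv_A:
  assumes "r \<ge> 1" "\<forall>k\<in>set ms0. k \<ge> 1" "norm t < 1" "t \<noteq> 0"
  shows "(R n (ms0 @ [Suc r]) has_field_derivative R n (ms0 @ [r]) t / t) (at t)"
proof -
  define q where "q = length ms0"
  have d1: "((\<lambda>t. Ez n ms0 (\<lambda>m. P (Suc r) m t)) has_field_derivative Ez n ms0 (\<lambda>m. P r m t / t)) (at t)"
    by (rule Ez_deriv) (rule P_deriv_Suc[OF assms(4)])
  have d2: "(Li (Suc r # rev (drop i ms0)) has_field_derivative Li (r # rev (drop i ms0)) t / t) (at t)" for i
    using assms set_rev_drop[of i ms0] by (intro LiD1) auto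
  have d3: "(Li [Suc r] has_field_derivative Li [r] t / t) (at t)"
    using assms by (intro LiD1) auto
  have "((\<lambda>t. (-1) ^ Suc q * Ez n ms0 (\<lambda>m. P (Suc r) m t)
     - (\<Sum>i<q. (-1) ^ Suc i * zeta_star n (take i ms0) * Li (Suc r # rev (drop i ms0)) t)
     - (-1) ^ Suc q * zeta_star n ms0 * Li [Suc r] t) has_field_derivative
     (-1) ^ Suc q * Ez n ms0 (\<lambda>m. P r m t / t)
     - (\<Sum>i<q. (-1) ^ Suc i * zeta_star n (take i ms0) * (Li (r # rev (drop i ms0)) t / t))
     - (-1) ^ Suc q * zeta_star n ms0 * (Li [r] t / t)) (at t)"
    by (intro DERIV_diff DERIV_cmult DERIV_sum d1 d2 d3)
  moreover have "Ez n ms0 (\<lambda>m. P r m t / t) = Ez n ms0 (\<lambda>m. P r m t) / t"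
    using Ez_cmult[of n ms0 "1 / t" "\<lambda>m. P r m t"] by simp
  ultimately have D: "(R n (ms0 @ [Suc r]) has_field_derivative
     (-1) ^ Suc q * (Ez n ms0 (\<lambda>m. P r m t) / t)
     - (\<Sum>i<q. (-1) ^ Suc i * zeta_star n (take i ms0) * (Li (r # rev (drop i ms0)) t / t))
     - (-1) ^ Suc q * zeta_star n ms0 * (Li [r] t / t)) (at t)"
    unfolding R_snoc[abs_def] q_def[symmetric] by simp
  define S where "S = (\<Sum>i<q. (-1) ^ Suc i * zeta_star n (take i ms0) * Li (r # rev (drop i ms0)) t)"
  have "(\<Sum>i<q. (-1) ^ Suc i * zeta_star n (take i ms0) * (Li (r # rev (drop i ms0)) t / t)) = S / t"
    unfolding S_def sum_divide_distrib by (simp add: mult.assoc)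
  moreover have "R n (ms0 @ [r]) t = (-1) ^ Suc q * Ez n ms0 (\<lambda>m. P r m t) - S
     - (-1) ^ Suc q * zeta_star n ms0 * Li [r] t"
    unfolding R_snoc S_def q_def ..
  ultimately show ?thesis using D by (simp add: diff_divide_distrib add_divide_distrib)
qed

lemma R_deriv_B:
  assumes "\<forall>k\<in>set ms0. k \<ge> 1" "norm t < 1"
  shows "(R n (ms0 @ [1]) has_field_derivative R n ms0 t / (1 - t)) (at t)"
proof -
  define q where "q = length ms0"
  have t1: "t \<noteq> 1" using assms by auto
  have d1: "((\<lambda>t. Ez n ms0 (\<lambda>m. P 1 m t)) has_field_derivative Ez n ms0 (\<lambda>m. (1 - t ^ m) / (1 - t))) (at t)"
    by (rule Ez_deriv) (rule P_deriv_1[OF t1])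
  have d2: "i < q \<Longrightarrow> (Li (1 # rev (drop i ms0)) has_field_derivative Li (rev (drop i ms0)) t / (1 - t)) (at t)" for i
    using assms set_rev_drop[of i ms0] by (intro LiD2) (auto simp: q_def)
  have d3: "(Li [1] has_field_derivative 1 / (1 - t)) (at t)"
    using assms by (intro LiD3) auto
  have "((\<lambda>t. (-1) ^ Suc q * Ez n ms0 (\<lambda>m. P 1 m t)
     - (\<Sum>i<q. (-1) ^ Suc i * zeta_star n (take i ms0) * Li (1 # rev (drop i ms0)) t)
     - (-1) ^ Suc q * zeta_star n ms0 * Li [1] t) has_field_derivative
     (-1) ^ Suc q * Ez n ms0 (\<lambda>m. (1 - t ^ m) / (1 - t))
     - (\<Sum>i<q. (-1) ^ Suc i * zeta_star n (take i ms0) * (Li (rev (drop i ms0)) t / (1 - t)))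
     - (-1) ^ Suc q * zeta_star n ms0 * (1 / (1 - t))) (at t)"
    by (intro DERIV_diff DERIV_cmult DERIV_sum d1 d2 d3) auto
  moreover have "Ez n ms0 (\<lambda>m. (1 - t ^ m) / (1 - t)) = (zeta_star n ms0 - Ez n ms0 (\<lambda>m. t ^ m)) / (1 - t)"
  proof -
    have "Ez n ms0 (\<lambda>m. (1 - t ^ m) / (1 - t)) = Ez n ms0 (\<lambda>m. (1 / (1 - t)) * ((\<lambda>_. 1) m - t ^ m))"
      by simp
    also have "\<dots> = (1 / (1 - t)) * (Ez n ms0 (\<lambda>_. 1) - Ez n ms0 (\<lambda>m. t ^ m))"
      by (simp only: Ez_cmult Ez_diff)
    finally show ?thesis by (simp add: zeta_star_Ez)
  qed
  ultimately have D: "(R n (ms0 @ [1]) has_field_derivative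
     (-1) ^ Suc q * ((zeta_star n ms0 - Ez n ms0 (\<lambda>m. t ^ m)) / (1 - t))
     - (\<Sum>i<q. (-1) ^ Suc i * zeta_star n (take i ms0) * (Li (rev (drop i ms0)) t / (1 - t)))
     - (-1) ^ Suc q * zeta_star n ms0 * (1 / (1 - t))) (at t)"
    unfolding R_snoc[abs_def] q_def[symmetric] by simp
  define Z where "Z = zeta_star n ms0"
  define E where "E = Ez n ms0 (\<lambda>m. t ^ m)"
  define S where "S = (\<Sum>i<q. (-1) ^ Suc i * zeta_star n (take i ms0) * Li (rev (drop i ms0)) t)"
  have "(\<Sum>i<q. (-1) ^ Suc i * zeta_star n (take i ms0) * (Li (rev (drop i ms0)) t / (1 - t))) = S / (1 - t)"
    unfolding S_def sum_divide_distrib by (simp add: mult.assoc)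
  then have D': "(R n (ms0 @ [1]) has_field_derivative
     (-1) ^ Suc q * ((Z - E) / (1 - t)) - S / (1 - t) - (-1) ^ Suc q * Z * (1 / (1 - t))) (at t)"
    using D unfolding Z_def E_def by simp
  have "(-1) ^ Suc q * ((Z - E) / (1 - t)) - S / (1 - t) - (-1) ^ Suc q * Z * (1 / (1 - t))
      = ((-1) ^ q * E - S) / (1 - t)"
    by (simp add: diff_divide_distrib algebra_simps)
  moreover have "R n ms0 t = (-1) ^ q * E - S" unfolding R_def q_def E_def S_def ..
  ultimately show ?thesis using D' by simp
qed


lemma ftc_step:
  fixes \<Phi> g G :: "complex \<Rightarrow> complex"
  assumes cont: "continuous_on {0..1} (\<lambda>u. \<Phi> (linepath 0 t u))"
    and z: "\<Phi> 0 = 0" and n: "n \<ge> 1"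
    and der: "\<And>u. u \<in> {0<..<1} \<Longrightarrow>
       (\<Phi> has_field_derivative (of_nat n * (g (linepath 0 t u) * G (linepath 0 t u)))) (at (linepath 0 t u))"
  shows "of_nat n * contour_integral (linepath 0 t) (\<lambda>s. g s * G s) = \<Phi> t"
proof -
  have "((\<lambda>u. (t - 0) * (of_nat n * (g (linepath 0 t u) * G (linepath 0 t u)))) has_integral
          (\<Phi> (linepath 0 t 1) - \<Phi> (linepath 0 t 0))) {0..1}"
  proof (rule fundamental_theorem_of_calculus_interior)
    show "continuous_on {0..1} (\<lambda>u. \<Phi> (linepath 0 t u))" by (rule cont)
    fix u :: real assume u: "u \<in> {0<..<1}"
    have "((\<Phi> \<circ> linepath 0 t) has_vector_derivative
            ((t - 0) * (of_nat n * (g (linepath 0 t u) * G (linepath 0 t u))))) (at u)"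
      by (rule field_vector_diff_chain_at[OF has_vector_derivative_linepath_within der[OF u]])
    then show "((\<lambda>u. \<Phi> (linepath 0 t u)) has_vector_derivative
            ((t - 0) * (of_nat n * (g (linepath 0 t u) * G (linepath 0 t u))))) (at u)"
      by (simp add: o_def)
  qed simp
  then have "((\<lambda>u. (t - 0) * (of_nat n * (g (linepath 0 t u) * G (linepath 0 t u)))) has_integral \<Phi> t) {0..1}"
    using z by (simp add: linepath_1')
  from has_integral_mult_right[OF this, of "1 / of_nat n"]
  have "((\<lambda>u. g (linepath 0 t u) * G (linepath 0 t u) * (t - 0)) has_integral (\<Phi> t / of_nat n)) {0..1}"
    using n by (simp add: field_simps)
  then have "((\<lambda>s. g s * G s) has_contour_integral (\<Phi> t / of_nat n)) (linepath 0 t)"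
    by (simp only: has_contour_integral_linepath)
  then have "contour_integral (linepath 0 t) (\<lambda>s. g s * G s) = \<Phi> t / of_nat n"
    by (rule contour_integral_unique)
  then show ?thesis using n by simp
qed


lemma Ez_cont:
  assumes "\<And>m. continuous_on S (\<lambda>t. F m t)"
  shows "continuous_on S (\<lambda>t. Ez n ms (\<lambda>m. F m t))"
proof (induction ms arbitrary: n)
  case Nil then show ?case using assms by simp
next
  case (Cons k ks)
  then show ?case by (simp only: Ez.simps) (intro continuous_on_sum continuous_on_mult_left, auto)
qed

lemma Li_cont_gen:
  assumes "k \<ge> 1" "\<forall>x\<in>set rest. x \<ge> 1"
  shows "continuous_on (cball 0 1 - {1}) (Li (k # rest))"
proof (cases "k = 1")
  case True then show ?thesis using Li_cont1[of "k # rest" rest] assms by auto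
next
  case False
  then have "continuous_on (cball 0 1) (Li (k # rest))" using Li_cont2[of "k # rest" k rest] assms by auto
  then show ?thesis by (rule continuous_on_subset) auto
qed

lemma R_cont:
  assumes "\<forall>x\<in>set ms0. x \<ge> 1"
    and "\<And>rest. \<forall>x\<in>set rest. x \<ge> 1 \<Longrightarrow> continuous_on A (Li (k # rest))"
  shows "continuous_on A (R n (ms0 @ [k]))"
proof -
  have "continuous_on A (\<lambda>t. (-1) ^ Suc (length ms0) * Ez n ms0 (\<lambda>m. P k m t)
     - (\<Sum>i<length ms0. (-1) ^ Suc i * zeta_star n (take i ms0) * Li (k # rev (drop i ms0)) t)
     - (-1) ^ Suc (length ms0) * zeta_star n ms0 * Li [k] t)"
  proof (intro continuous_intros Ez_cont)
    show "continuous_on A (\<lambda>t. P k m t)" for m unfolding P_def by (intro continuous_intros) auto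
    show "continuous_on A (Li (k # rev (drop i ms0)))" for i
      using assms set_rev_drop[of i ms0] by (intro assms(2)) auto
    show "continuous_on A (Li [k])" using assms(2)[of "[]"] by simp
  qed
  then show ?thesis unfolding R_snoc[abs_def] .
qed

lemma Li_zero: "ks \<noteq> [] \<Longrightarrow> Li ks 0 = 0"
  unfolding Li_def using li_coeff_zero by simp

lemma R_zero:
  assumes "n \<ge> 1"
  shows "R n ms 0 = 0"
proof -
  have "Ez n ms (\<lambda>m. 0 ^ m) = Ez n ms (\<lambda>m. 0 * (\<lambda>_. 1) m)"
    by (rule Ez_cong) (use assms in auto)
  also have "\<dots> = 0" by (simp only: Ez_cmult) simp
  finally have e: "Ez n ms (\<lambda>m. 0 ^ m) = 0" .
  have "(\<Sum>i<length ms. (-1) ^ Suc i * zeta_star n (take i ms) * Li (rev (drop i ms)) 0) = 0"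
  proof (rule sum.neutral, rule ballI)
    fix i assume "i \<in> {..<length ms}"
    then have "rev (drop i ms) \<noteq> []" by simp
    then show "(-1) ^ Suc i * zeta_star n (take i ms) * Li (rev (drop i ms)) 0 = 0"
      using Li_zero by simp
  qed
  then show ?thesis unfolding R_def e by simp
qed

lemma forms_B: "forms n (ms0 @ [1]) = forms n ms0 @ [\<lambda>t. 1 / (1 - t)]"
  unfolding forms_def by simp

lemma forms_A: "r \<ge> 1 \<Longrightarrow> forms n (ms0 @ [Suc r]) = forms n (ms0 @ [r]) @ [\<lambda>t. 1 / t]"
  unfolding forms_def by (cases r) (simp_all add: replicate_append_same)

lemma seg_ne1:
  fixes t :: complex
  assumes "u \<in> {0..1}" "norm t \<le> 1" "t \<noteq> 1"
  shows "linepath 0 t u \<noteq> 1"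
proof
  assume h: "linepath 0 t u = 1"
  show False
  proof (cases "u = 1")
    case True then show False using h assms by simp
  next
    case False
    then have "u < 1" using assms by auto
    have "norm (linepath 0 t u) = u * norm t" using assms by simp
    also have "\<dots> \<le> u" using assms by (simp add: mult_left_le)
    finally have "norm (linepath 0 t u) < 1" using \<open>u < 1\<close> by simp
    then show False unfolding h by simp
  qed
qed

lemma seg_in: "u \<in> {0..1} \<Longrightarrow> norm t \<le> 1 \<Longrightarrow> norm (linepath 0 t u) \<le> 1"
  by (simp add: mult_le_one)

lemma seg_lt: "u \<in> {0<..<1} \<Longrightarrow> norm t \<le> 1 \<Longrightarrow> norm (linepath 0 t u) < 1"
proof -
  assume u: "u \<in> {0<..<1}" and t: "norm t \<le> 1"
  have "norm (linepath 0 t u) = u * norm t" using u by simp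
  also have "\<dots> \<le> u" using u t by (simp add: mult_left_le)
  also have "\<dots> < 1" using u by simp
  finally show ?thesis .
qed

lemma seg_nz: "u \<in> {0<..<1} \<Longrightarrow> t \<noteq> 0 \<Longrightarrow> linepath 0 t u \<noteq> 0"
  by simp


definition good :: "nat \<Rightarrow> nat list \<Rightarrow> bool" where
  "good n ms \<longleftrightarrow> (\<forall>t. norm t \<le> 1 \<longrightarrow> (ms \<noteq> [] \<longrightarrow> (last ms, t) \<noteq> (1, 1)) \<longrightarrow>
       of_nat n * itint (rev (forms n ms)) t = R n ms t)"

lemma good_base:
  assumes "n \<ge> 1"
  shows "good n []"
  unfolding good_def
proof (intro allI impI)
  fix t :: complex
  have "of_nat n * contour_integral (linepath 0 t) (\<lambda>s. s ^ (n - 1) * (\<lambda>_. 1) s) = (\<lambda>t. t ^ n) t"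
  proof (rule ftc_step[OF _ _ assms])
    show "continuous_on {0..1} (\<lambda>u. linepath 0 t u ^ n)" by (intro continuous_intros)
    show "(0::complex) ^ n = 0" using assms by simp
    fix u :: real
    show "((\<lambda>t. t ^ n) has_field_derivative of_nat n * (linepath 0 t u ^ (n - 1) * 1)) (at (linepath 0 t u))"
      by (auto intro!: derivative_eq_intros)
  qed
  then show "of_nat n * itint (rev (forms n [])) t = R n [] t"
    by (simp add: forms_def R_def)
qed

lemma good_B:
  assumes "n \<ge> 1" "\<forall>k\<in>set ms0. k \<ge> 1" "good n ms0"
  shows "good n (ms0 @ [1])"
  unfolding good_def
proof (intro allI impI)
  fix t :: complex
  assume t1: "norm t \<le> 1" and t2: "ms0 @ [1] \<noteq> [] \<longrightarrow> (last (ms0 @ [1]), t) \<noteq> (1, 1)"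
  have tn1: "t \<noteq> 1" using t2 by simp
  have it: "itint (rev (forms n (ms0 @ [1]))) t
      = contour_integral (linepath 0 t) (\<lambda>s. (\<lambda>s. 1 / (1 - s)) s * itint (rev (forms n ms0)) s)"
    unfolding forms_B by simp
  show "of_nat n * itint (rev (forms n (ms0 @ [1]))) t = R n (ms0 @ [1]) t"
  proof (cases "t = 0")
    case True then show ?thesis unfolding it using R_zero[OF assms(1)] by simp
  next
    case tnz: False
    show ?thesis unfolding it
    proof (rule ftc_step[where \<Phi>="R n (ms0 @ [1])", OF _ R_zero[OF assms(1)] assms(1)])
      have "continuous_on (cball 0 1 - {1}) (R n (ms0 @ [1]))"
        using assms by (intro R_cont Li_cont_gen) auto
      then show "continuous_on {0..1} (\<lambda>u. R n (ms0 @ [1]) (linepath 0 t u))"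
        by (rule continuous_on_compose2) 
           (use seg_ne1[OF _ t1 tn1] seg_in[OF _ t1] in \<open>auto intro!: continuous_intros simp del: linepath_0\<close>)
      fix u :: real assume u: "u \<in> {0<..<1}"
      define s where "s = linepath 0 t u"
      have s1: "norm s < 1" unfolding s_def by (rule seg_lt[OF u t1])
      then have sn1: "s \<noteq> 1" by auto
      have IH: "of_nat n * itint (rev (forms n ms0)) s = R n ms0 s"
        using assms(3) s1 sn1 unfolding good_def by auto
      have "(R n (ms0 @ [1]) has_field_derivative R n ms0 s / (1 - s)) (at s)"
        by (rule R_deriv_B[OF assms(2) s1])
      moreover have "R n ms0 s / (1 - s) = of_nat n * (1 / (1 - s) * itint (rev (forms n ms0)) s)"
        using IH by simp
      ultimately have "(R n (ms0 @ [1]) has_field_derivative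
          of_nat n * ((\<lambda>s. 1 / (1 - s)) s * itint (rev (forms n ms0)) s)) (at s)"
        by simp
      then show "(R n (ms0 @ [1]) has_field_derivative
          of_nat n * ((\<lambda>s. 1 / (1 - s)) (linepath 0 t u) * itint (rev (forms n ms0)) (linepath 0 t u)))
          (at (linepath 0 t u))"
        by (simp only: s_def)
    qed
  qed
qed

lemma good_A:
  assumes "n \<ge> 1" "r \<ge> 1" "\<forall>k\<in>set ms0. k \<ge> 1" "good n (ms0 @ [r])"
  shows "good n (ms0 @ [Suc r])"
  unfolding good_def
proof (intro allI impI)
  fix t :: complex
  assume t1: "norm t \<le> 1"
  have it: "itint (rev (forms n (ms0 @ [Suc r]))) t
      = contour_integral (linepath 0 t) (\<lambda>s. (\<lambda>s. 1 / s) s * itint (rev (forms n (ms0 @ [r]))) s)"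
    unfolding forms_A[OF assms(2)] by simp
  show "of_nat n * itint (rev (forms n (ms0 @ [Suc r]))) t = R n (ms0 @ [Suc r]) t"
  proof (cases "t = 0")
    case True then show ?thesis unfolding it using R_zero[OF assms(1)] by simp
  next
    case tnz: False
    show ?thesis unfolding it
    proof (rule ftc_step[where \<Phi>="R n (ms0 @ [Suc r])", OF _ R_zero[OF assms(1)] assms(1)])
      have "continuous_on (cball 0 1) (R n (ms0 @ [Suc r]))"
        using assms by (intro R_cont Li_cont2[OF refl]) auto
      then show "continuous_on {0..1} (\<lambda>u. R n (ms0 @ [Suc r]) (linepath 0 t u))"
        by (rule continuous_on_compose2) 
           (use seg_in[OF _ t1] in \<open>auto intro!: continuous_intros simp del: linepath_0\<close>)
      fix u :: real assume u: "u \<in> {0<..<1}"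
      define s where "s = linepath 0 t u"
      have s1: "norm s < 1" unfolding s_def by (rule seg_lt[OF u t1])
      then have sn1: "s \<noteq> 1" by auto
      have snz: "s \<noteq> 0" unfolding s_def by (rule seg_nz[OF u tnz])
      have IH: "of_nat n * itint (rev (forms n (ms0 @ [r]))) s = R n (ms0 @ [r]) s"
        using assms(4) s1 sn1 unfolding good_def by auto
      have "(R n (ms0 @ [Suc r]) has_field_derivative R n (ms0 @ [r]) s / s) (at s)"
        by (rule R_deriv_A[OF assms(2) assms(3) s1 snz])
      moreover have "R n (ms0 @ [r]) s / s = of_nat n * (1 / s * itint (rev (forms n (ms0 @ [r]))) s)"
        using IH by simp
      ultimately have "(R n (ms0 @ [Suc r]) has_field_derivative
          of_nat n * ((\<lambda>s. 1 / s) s * itint (rev (forms n (ms0 @ [r]))) s)) (at s)"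
        by simp
      then show "(R n (ms0 @ [Suc r]) has_field_derivative
          of_nat n * ((\<lambda>s. 1 / s) (linepath 0 t u) * itint (rev (forms n (ms0 @ [r]))) (linepath 0 t u)))
          (at (linepath 0 t u))"
        by (simp only: s_def)
    qed
  qed
qed

lemma good_all:
  assumes "n \<ge> 1" "\<forall>k\<in>set ms. k \<ge> 1"
  shows "good n ms"
  using assms(2)
proof (induction ms rule: rev_induct)
  case Nil then show ?case using good_base[OF assms(1)] by simp
next
  case (snoc k ms0)
  have ms0: "\<forall>k\<in>set ms0. k \<ge> 1" and gms0: "good n ms0" using snoc by auto
  have "k \<ge> 1" using snoc by auto
  then show ?case
  proof (induction k rule: nat_induct_at_least)
    case base then show ?case using good_B[OF assms(1) ms0 gms0] by simp
  next
    case (Suc r) then show ?case using good_A[OF assms(1) _ ms0] by simp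
  qed
qed


theorem mainTheorem1:
  fixes ms :: "nat list" and n :: nat and x :: complex
  assumes "length ms \<ge> 1"
    and "\<forall>mi\<in>set ms. mi \<ge> 1"
    and "n \<ge> 1"
    and "norm x \<le> 1"
    and "(last ms, x) \<noteq> (1, 1)"
  shows "of_nat n * iterated_integral_0 x (forms n ms)
    = (-1) ^ length ms * zeta_star_x n ms (replicate (length ms - 1) 1 @ [x])
      - (\<Sum>j=1..length ms. (-1) ^ j * zeta_star n (take (j - 1) ms)
                              * Li (rev (drop (j - 1) ms)) x)"
proof -
  have ne: "ms \<noteq> []" using assms(1) by auto
  have "of_nat n * iterated_integral_0 x (forms n ms) = R n ms x"
    using good_all[OF assms(3,2)] assms(4,5) unfolding good_def iterated_integral_0_def by auto
  also have "\<dots> = (-1) ^ length ms * zeta_star_x n ms (replicate (length ms - 1) 1 @ [x])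
      - (\<Sum>j=1..length ms. (-1) ^ j * zeta_star n (take (j - 1) ms)
                              * Li (rev (drop (j - 1) ms)) x)"
  proof -
    have "(\<Sum>j=1..length ms. (-1) ^ j * zeta_star n (take (j - 1) ms) * Li (rev (drop (j - 1) ms)) x)
        = (\<Sum>i<length ms. (-1) ^ Suc i * zeta_star n (take i ms) * Li (rev (drop i ms)) x)"
      by (simp add: sum.atLeast1_atMost_eq)
    then show ?thesis unfolding R_def L1[OF ne] by simp
  qed
  finally show ?thesis .
qed

end
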